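(* Let $h>0$ satisfy $L_eh^2\le1/9$, where $L_e=L+2\epsilon\tilde L$. For $x,v\in\mathbb{R}^{Nd}$ and $\mathcal U_0\sim\mathrm{Unif}[0,1]$, let $Q_h(x,v)=x+hv-\frac{h^2}2\nabla U(x+h\mathcal U_0v)$ and $P_h(x,v)=v-h\nabla U(x+h\mathcal U_0v)$. Then $$\sum_{\ell=1}^N\mathbb{E}\Big[\big|\!\big|\!\big|(Q^\ell_h(x,v),P^\ell_h(x,v))-(q^\ell_h(x,v),p^\ell_h(x,v))\big|\!\big|\!\big|^2\Big]\le6(L_eh^2)^2\sum_{\ell=1}^N\Big(|\!|\!|(x^\ell,v^\ell)|\!|\!|^2+\frac13L_e^{-2}\epsilon^2\mathbf W_0^2\Big),$$ where $\mathbf W_0=|\nabla_1W(0,0)|$.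
   Context: Standing assumptions: $\epsilon\ge0$; $V:\mathbb{R}^d\to\mathbb{R}$, $W:\mathbb{R}^d\times\mathbb{R}^d\to\mathbb{R}$ are $C^1$, $\nabla_1W$ the gradient in the first argument, constants $L>0$, $\tilde L\ge0$ with: (a) $V(0)=0$, $V\ge0$; (b) $|\nabla V(x)-\nabla V(y)|\le L|x-y|$; (d) $W$ symmetric, $|\nabla_1W(x,y)-\nabla_1W(\tilde x,\tilde y)|\le\tilde L(|x-\tilde x|+|y-\tilde y|)$. Points of $\mathbb{R}^{Nd}$: $x=(x^1,\dots,x^N)$. $U(x)=\sum_i\big(V(x^i)+\frac\epsilon{2N}\sum_jW(x^i,x^j)\big)$, $\nabla_iU=\partial U/\partial x^i$. Exact flow $(q_t,p_t)(x,v)$: $\dot q^i_t=p^i_t$, $\dot p^i_t=-\nabla_iU(q_t)$, $(q_0,p_0)=(x,v)$. For $(a,b)\in\mathbb{R}^{2d}$, $|\!|\!|(a,b)|\!|\!|^2=|a|^2+L_e^{-1}|b|^2$. *)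

theory Defs
  imports "HOL-Analysis.Analysis"
begin

text \<open>Configurations in R^{Nd}: elements of 'a^'n, where 'a (euclidean space) plays R^d
  and the finite type 'n indexes the N = CARD('n) particles.\<close>

definition Upot :: "real \<Rightarrow> ('a \<Rightarrow> real) \<Rightarrow> ('a \<Rightarrow> 'a \<Rightarrow> real) \<Rightarrow> 'a ^ 'n::finite \<Rightarrow> real" where
  "Upot eps V W X = (\<Sum>i\<in>UNIV. V (X $ i) + eps / (2 * real CARD('n)) * (\<Sum>j\<in>UNIV. W (X $ i) (X $ j)))"

definition tnorm2 :: "real \<Rightarrow> 'a::real_normed_vector \<Rightarrow> 'a \<Rightarrow> real" where
  "tnorm2 Le a b = (norm a)\<^sup>2 + (norm b)\<^sup>2 / Le"

end

theory Submission
  imports Defs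
begin

lemma gradW_cont:
  fixes gradW1 :: "'a::real_normed_vector \<Rightarrow> 'a \<Rightarrow> 'b::real_normed_vector"
  assumes Lt: "Lt \<ge> 0" and W_lip: "\<And>y z y' z'. norm (gradW1 y z - gradW1 y' z') \<le> Lt * (norm (y - y') + norm (z - z'))"
  shows "continuous (at w) (\<lambda>(a, b). gradW1 a b)"
proof (rule continuous_at_eps_delta[THEN iffD2], intro allI impI)
  fix e :: real assume e: "e > 0"
  show "\<exists>d>0. \<forall>x'. dist x' w < d \<longrightarrow> dist ((\<lambda>(a, b). gradW1 a b) x') ((\<lambda>(a, b). gradW1 a b) w) < e"
  proof (intro exI[of _ "e / (2 * Lt + 1)"] conjI allI impI)
    show "e / (2 * Lt + 1) > 0" using e Lt by simp
  next
    fix x' :: "'a \<times> 'a" assume d: "dist x' w < e / (2 * Lt + 1)"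
    obtain a b where x': "x' = (a, b)" by fastforce
    obtain a0 b0 where w: "w = (a0, b0)" by fastforce
    have dd: "dist x' w = norm (a - a0, b - b0)" using x' w by (simp add: dist_norm)
    have n1: "norm (a - a0) \<le> dist x' w" unfolding dd by (rule norm_fst_le)
    have n2: "norm (b - b0) \<le> dist x' w" unfolding dd by (rule norm_snd_le)
    have "dist (gradW1 a b) (gradW1 a0 b0) \<le> Lt * (norm (a - a0) + norm (b - b0))"
      using W_lip by (simp add: dist_norm)
    also have "\<dots> \<le> Lt * (2 * dist x' w)" using n1 n2 Lt by (intro mult_left_mono) auto
    also have "\<dots> \<le> (2 * Lt + 1) * dist x' w" using Lt by (simp add: algebra_simps)
    also have "\<dots> < (2 * Lt + 1) * (e / (2 * Lt + 1))" using d Lt by (intro mult_strict_left_mono) auto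
    also have "\<dots> = e" using Lt by simp
    finally show "dist ((\<lambda>(a, b). gradW1 a b) x') ((\<lambda>(a, b). gradW1 a b) w) < e"
      using x' w by simp
  qed
qed

lemma W_joint_deriv:
  fixes W :: "'a::real_inner \<Rightarrow> 'a \<Rightarrow> real"
  assumes Lt: "Lt \<ge> 0" and W_lip: "\<And>y z y' z'. norm (gradW1 y z - gradW1 y' z') \<le> Lt * (norm (y - y') + norm (z - z'))"
    and W_deriv: "\<And>y z. ((\<lambda>u. W u z) has_derivative (\<lambda>w. gradW1 y z \<bullet> w)) (at y)"
    and W_sym: "\<And>y z. W y z = W z y"
  shows "((\<lambda>(y, z). W y z) has_derivative (\<lambda>(dy, dz). gradW1 a b \<bullet> dy + gradW1 b a \<bullet> dz)) (at (a, b))"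
proof -
  have fy: "((\<lambda>y. W x y) has_derivative blinfun_apply (blinfun_inner_left (gradW1 y x))) (at y within UNIV)" for x y
  proof -
    have "((\<lambda>u. W u x) has_derivative (\<lambda>w. gradW1 y x \<bullet> w)) (at y)" by (rule W_deriv)
    then show ?thesis by (simp add: W_sym[of x] inner_commute)
  qed
  have c1: "continuous (at (a, b)) (\<lambda>(x, y). gradW1 y x)"
  proof -
    have g: "continuous (at (b, a)) (\<lambda>(x, y). gradW1 x y)" by (rule gradW_cont[OF Lt W_lip])
    have sw: "isCont (\<lambda>z::'a\<times>'a. (snd z, fst z)) (a, b)" by (intro continuous_intros)
    have "continuous (at (a, b)) ((\<lambda>(x, y). gradW1 x y) \<circ> (\<lambda>z. (snd z, fst z)))"
      using continuous_at_compose[OF sw] g by simp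
    moreover have eq: "(\<lambda>(x, y). gradW1 y x) = (\<lambda>z. gradW1 (snd z) (fst z))" by (auto simp: fun_eq_iff)
    ultimately show ?thesis by (simp add: o_def case_prod_beta)
  qed
  have c2: "continuous (at (a, b) within UNIV \<times> UNIV) (\<lambda>(x, y). blinfun_inner_left (gradW1 y x))"
  proof -
    have "continuous (at (a, b)) (blinfun_inner_left \<circ> (\<lambda>(x, y). gradW1 y x))"
      by (intro continuous_at_compose c1 linear_continuous_at bounded_linear_blinfun_inner_left)
    moreover have eq: "(\<lambda>(x, y). blinfun_inner_left (gradW1 y x)) = (\<lambda>z. blinfun_inner_left (gradW1 (snd z) (fst z)))" by (auto simp: fun_eq_iff)
    ultimately show ?thesis by (simp add: o_def case_prod_beta)
  qed
  have "((\<lambda>(x, y). W x y) has_derivative (\<lambda>(tx, ty). gradW1 a b \<bullet> tx + blinfun_inner_left (gradW1 b a) ty)) (at (a, b) within UNIV \<times> UNIV)"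
    by (rule has_derivative_partialsI[OF _ fy c2]) (simp_all add: W_deriv)
  then show ?thesis by (simp add: inner_commute)
qed

lemma gradU_eq:
  fixes V :: "'a::euclidean_space \<Rightarrow> real" and W :: "'a \<Rightarrow> 'a \<Rightarrow> real"
    and gradU :: "'a ^ 'n::finite \<Rightarrow> 'a ^ 'n"
  assumes Lt: "Lt \<ge> 0" and W_lip: "\<And>y z y' z'. norm (gradW1 y z - gradW1 y' z') \<le> Lt * (norm (y - y') + norm (z - z'))"
    and W_deriv: "\<And>y z. ((\<lambda>u. W u z) has_derivative (\<lambda>w. gradW1 y z \<bullet> w)) (at y)"
    and W_sym: "\<And>y z. W y z = W z y"
    and V_deriv: "\<And>y. (V has_derivative (\<lambda>w. gradV y \<bullet> w)) (at y)"
    and U_grad: "\<And>X. (Upot eps V W has_derivative (\<lambda>Y. gradU X \<bullet> Y)) (at X)"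
  shows "gradU X = (\<chi> i. gradV (X$i) + (eps / real CARD('n)) *\<^sub>R (\<Sum>j\<in>UNIV. gradW1 (X$i) (X$j)))"
proof -
  define G where "G = (\<chi> i. gradV (X$i) + (eps / real CARD('n)) *\<^sub>R (\<Sum>j\<in>UNIV. gradW1 (X$i) (X$j)))"
  have pr: "((\<lambda>X::'a^'n. (X$i, X$j)) has_derivative (\<lambda>Y. (Y$i, Y$j))) (at X)" for i j
    by (intro has_derivative_Pair bounded_linear_imp_has_derivative bounded_linear_vec_nth)
  have dW: "((\<lambda>X::'a^'n. W (X$i) (X$j)) has_derivative
     (\<lambda>Y. gradW1 (X$i) (X$j) \<bullet> Y$i + gradW1 (X$j) (X$i) \<bullet> Y$j)) (at X)" for i j
  proof -
    have "(((\<lambda>(y, z). W y z) \<circ> (\<lambda>X::'a^'n. (X$i, X$j))) has_derivative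
       ((\<lambda>(dy, dz). gradW1 (X$i) (X$j) \<bullet> dy + gradW1 (X$j) (X$i) \<bullet> dz) \<circ> (\<lambda>Y. (Y$i, Y$j)))) (at X)"
      by (rule diff_chain_at[OF pr W_joint_deriv[OF Lt W_lip W_deriv W_sym]])
    then show ?thesis by (simp add: o_def)
  qed
  have dV: "((\<lambda>X::'a^'n. V (X$i)) has_derivative (\<lambda>Y. gradV (X$i) \<bullet> Y$i)) (at X)" for i
  proof -
    have "((V \<circ> (\<lambda>X::'a^'n. X$i)) has_derivative ((\<lambda>w. gradV (X$i) \<bullet> w) \<circ> (\<lambda>Y. Y$i))) (at X)"
      by (rule diff_chain_at[OF bounded_linear_imp_has_derivative[OF bounded_linear_vec_nth] V_deriv])
    then show ?thesis by (simp add: o_def)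
  qed
  have D: "(Upot eps V W has_derivative (\<lambda>Y. \<Sum>i\<in>UNIV. gradV (X$i) \<bullet> Y$i + eps / (2 * real CARD('n)) *
      (\<Sum>j\<in>UNIV. gradW1 (X$i) (X$j) \<bullet> Y$i + gradW1 (X$j) (X$i) \<bullet> Y$j))) (at X)"
    unfolding Upot_def[abs_def]
    by (intro has_derivative_sum has_derivative_add has_derivative_mult_right dV dW)
  have eqD: "(\<Sum>i\<in>UNIV. gradV (X$i) \<bullet> Y$i + eps / (2 * real CARD('n)) *
      (\<Sum>j\<in>UNIV. gradW1 (X$i) (X$j) \<bullet> Y$i + gradW1 (X$j) (X$i) \<bullet> Y$j)) = G \<bullet> Y" for Y
  proof -
    have sw: "(\<Sum>i\<in>UNIV. \<Sum>j\<in>UNIV. gradW1 (X$j) (X$i) \<bullet> Y$j) = (\<Sum>i\<in>UNIV. \<Sum>j\<in>UNIV. gradW1 (X$i) (X$j) \<bullet> Y$i)"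
      by (rule sum.swap)
    have "(\<Sum>i\<in>UNIV. gradV (X$i) \<bullet> Y$i + eps / (2 * real CARD('n)) *
      (\<Sum>j\<in>UNIV. gradW1 (X$i) (X$j) \<bullet> Y$i + gradW1 (X$j) (X$i) \<bullet> Y$j))
      = (\<Sum>i\<in>UNIV. gradV (X$i) \<bullet> Y$i) + eps / (2 * real CARD('n)) *
      ((\<Sum>i\<in>UNIV. \<Sum>j\<in>UNIV. gradW1 (X$i) (X$j) \<bullet> Y$i) + (\<Sum>i\<in>UNIV. \<Sum>j\<in>UNIV. gradW1 (X$j) (X$i) \<bullet> Y$j))"
      by (simp add: sum.distrib sum_distrib_left distrib_left sum_divide_distrib add_divide_distrib)
    also have "\<dots> = (\<Sum>i\<in>UNIV. gradV (X$i) \<bullet> Y$i) + eps / real CARD('n) *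
      (\<Sum>i\<in>UNIV. \<Sum>j\<in>UNIV. gradW1 (X$i) (X$j) \<bullet> Y$i)"
      unfolding sw by simp
    also have "\<dots> = G \<bullet> Y"
      by (simp add: G_def inner_vec_def inner_add_left sum.distrib sum_distrib_left inner_sum_left)
    finally show ?thesis .
  qed
  have "(\<lambda>Y. gradU X \<bullet> Y) = (\<lambda>Y. G \<bullet> Y)"
    using has_derivative_unique[OF U_grad D] eqD by simp
  then have "gradU X \<bullet> (gradU X - G) = G \<bullet> (gradU X - G)" by metis
  then have "(gradU X - G) \<bullet> (gradU X - G) = 0" by (simp add: inner_diff_left)
  then show ?thesis unfolding G_def[symmetric] by simp
qed

lemma G_lip:
  fixes gradV :: "'a::real_normed_vector \<Rightarrow> 'a" and G :: "'a ^ 'n::finite \<Rightarrow> 'a ^ 'n"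
  assumes GX: "\<And>X. G X = (\<chi> i. gradV (X$i) + (eps / real CARD('n)) *\<^sub>R (\<Sum>j\<in>UNIV. gradW1 (X$i) (X$j)))"
    and eps: "eps \<ge> 0" and Lt: "Lt \<ge> 0" and L: "L \<ge> 0"
    and V_lip: "\<And>y z. norm (gradV y - gradV z) \<le> L * norm (y - z)"
    and W_lip: "\<And>y z y' z'. norm (gradW1 y z - gradW1 y' z') \<le> Lt * (norm (y - y') + norm (z - z'))"
  shows "norm (G X - G Y) \<le> (L + 2 * eps * Lt) * norm (X - Y)"
proof -
  define N where "N = real CARD('n)"
  have N: "N > 0" unfolding N_def by simp
  define d where "d i = norm (X$i - Y$i)" for i
  define S where "S = (\<Sum>j\<in>UNIV. d j)"
  have comp: "norm (G X $ i - G Y $ i) \<le> (L + eps * Lt) * d i + (eps * Lt / N) * S" for i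
  proof -
    have "G X $ i - G Y $ i = (gradV (X$i) - gradV (Y$i)) + (eps / N) *\<^sub>R (\<Sum>j\<in>UNIV. gradW1 (X$i) (X$j) - gradW1 (Y$i) (Y$j))"
      by (simp add: GX N_def sum_subtractf scaleR_diff_right algebra_simps)
    also have "norm \<dots> \<le> norm (gradV (X$i) - gradV (Y$i)) + (eps / N) * norm (\<Sum>j\<in>UNIV. gradW1 (X$i) (X$j) - gradW1 (Y$i) (Y$j))"
      using eps N by (intro order_trans[OF norm_triangle_ineq]) simp
    also have "\<dots> \<le> L * d i + (eps / N) * (\<Sum>j\<in>UNIV. Lt * (d i + d j))"
    proof (intro add_mono mult_left_mono)
      show "norm (gradV (X$i) - gradV (Y$i)) \<le> L * d i" unfolding d_def by (rule V_lip)
      show "norm (\<Sum>j\<in>UNIV. gradW1 (X$i) (X$j) - gradW1 (Y$i) (Y$j)) \<le> (\<Sum>j\<in>UNIV. Lt * (d i + d j))"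
        unfolding d_def by (intro order_trans[OF norm_sum] sum_mono W_lip)
      show "0 \<le> eps / N" using eps N by simp
    qed
    also have "\<dots> = (L + eps * Lt) * d i + (eps * Lt / N) * S"
      using N by (simp add: S_def N_def sum.distrib sum_distrib_left sum_divide_distrib algebra_simps)
    finally show ?thesis .
  qed
  have dn: "L2_set d UNIV = norm (X - Y)" by (simp add: norm_vec_def d_def[abs_def])
  have S_le: "S \<le> sqrt N * norm (X - Y)"
  proof -
    have "S = (\<Sum>j\<in>UNIV. \<bar>d j\<bar> * \<bar>1\<bar>)" by (simp add: S_def d_def)
    also have "\<dots> \<le> L2_set d UNIV * L2_set (\<lambda>_::'n. 1) UNIV" using L2_set_mult_ineq[of d "\<lambda>_. 1" UNIV] by simp
    also have "\<dots> = sqrt N * norm (X - Y)" by (simp add: dn L2_set_constant N_def)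
    finally show ?thesis .
  qed
  have S0: "S \<ge> 0" unfolding S_def d_def by (intro sum_nonneg) auto
  have "norm (G X - G Y) = L2_set (\<lambda>i. norm (G X $ i - G Y $ i)) UNIV" by (simp add: norm_vec_def)
  also have "\<dots> \<le> L2_set (\<lambda>i. (L + eps * Lt) * d i + (eps * Lt / N) * S) UNIV"
    by (intro L2_set_mono comp) auto
  also have "\<dots> \<le> L2_set (\<lambda>i. (L + eps * Lt) * d i) UNIV + L2_set (\<lambda>i::'n. (eps * Lt / N) * S) UNIV"
    by (rule L2_set_triangle_ineq)
  also have "\<dots> = (L + eps * Lt) * norm (X - Y) + sqrt N * ((eps * Lt / N) * S)"
    using eps Lt L N S0 by (simp add: L2_set_right_distrib[symmetric] dn L2_set_constant N_def)
  also have "\<dots> \<le> (L + eps * Lt) * norm (X - Y) + sqrt N * ((eps * Lt / N) * (sqrt N * norm (X - Y)))"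
    using eps Lt N S_le by (intro add_left_mono mult_left_mono) auto
  also have "\<dots> = (L + 2 * eps * Lt) * norm (X - Y)"
  proof -
    have "sqrt N * sqrt N = N" using N by simp
    then show ?thesis using N by (simp add: field_simps)
  qed
  finally show ?thesis .
qed

lemma vd_bound:
  fixes f :: "real \<Rightarrow> 'b::real_inner"
  assumes r: "r \<ge> 0"
    and d: "\<And>t. t \<in> {0..r} \<Longrightarrow> (f has_vector_derivative f' t) (at t)"
    and B: "\<And>t. t \<in> {0..r} \<Longrightarrow> norm (f' t) \<le> B"
  shows "norm (f r - f 0) \<le> B * r"
proof (cases "r = 0")
  case True then show ?thesis by simp
next
  case False
  then have r0: "0 < r" using r by simp
  have cont: "continuous_on {0..r} f"
    using d by (intro continuous_at_imp_continuous_on ballI has_vector_derivative_continuous) auto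
  obtain t where t: "t \<in> {0<..<r}" and le: "norm (f r - f 0) \<le> norm ((\<lambda>s. s *\<^sub>R f' t) (r - 0))"
    using mvt_general[OF r0 cont, of "\<lambda>t s. s *\<^sub>R f' t"] d
    by (auto simp: has_vector_derivative_def)
  have "norm ((\<lambda>s. s *\<^sub>R f' t) (r - 0)) = r * norm (f' t)" using r by simp
  also have "\<dots> \<le> r * B" using B[of t] t r by (intro mult_left_mono) auto
  finally show ?thesis using le by (simp add: mult.commute)
qed

lemma gradV0:
  fixes V :: "'a::real_inner \<Rightarrow> real"
  assumes V_deriv: "\<And>y. (V has_derivative (\<lambda>w. gradV y \<bullet> w)) (at y)"
    and V0: "V 0 = 0" and Vnonneg: "\<And>y. V y \<ge> 0"
  shows "gradV 0 = 0"
proof -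
  have "(\<lambda>w. gradV 0 \<bullet> w) = (\<lambda>v. 0)"
    by (rule differential_zero_maxmin[of 0 UNIV V]) (auto simp: V_deriv V0 Vnonneg)
  then have "gradV 0 \<bullet> gradV 0 = 0" by metis
  then show ?thesis by simp
qed

lemma norm2_vec: "(norm (X :: 'a::real_normed_vector ^ 'n::finite))\<^sup>2 = (\<Sum>l\<in>UNIV. (norm (X $ l))\<^sup>2)"
  by (simp add: norm_vec_def L2_set_def sum_nonneg)

lemma sum_tnorm2:
  fixes A B :: "'a::real_normed_vector ^ 'n::finite"
  shows "(\<Sum>l\<in>UNIV. tnorm2 Le (A $ l) (B $ l)) = (norm A)\<^sup>2 + (norm B)\<^sup>2 / Le"
  by (simp add: tnorm2_def norm2_vec sum.distrib sum_divide_distrib)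

lemma sqsum3: "((a::real) + b + c)\<^sup>2 \<le> 3 * (a\<^sup>2 + b\<^sup>2 + c\<^sup>2)"
proof -
  have "0 \<le> (a - b)\<^sup>2 + (b - c)\<^sup>2 + (a - c)\<^sup>2" by simp
  then show ?thesis by (simp add: power2_eq_square algebra_simps)
qed

lemma sqsum2: "((x::real) + y)\<^sup>2 \<le> 3/2 * x\<^sup>2 + 3 * y\<^sup>2"
proof -
  have "0 \<le> (x - 2 * y)\<^sup>2" by simp
  then show ?thesis by (simp add: power2_eq_square algebra_simps)
qed

lemma final_ineq:
  fixes Le h nx nv b K M D :: real
  assumes Le: "Le > 0" and h: "h > 0" and step: "Le * h\<^sup>2 \<le> 1 / 9"
    and nx: "nx \<ge> 0" and nv: "nv \<ge> 0" and b: "b \<ge> 0" and K: "K \<ge> 0"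
    and M: "M = Le * K + b" and KM: "K \<le> nx + h * nv + h\<^sup>2 * M"
    and D: "D = Le * (h\<^sup>2 * M + h * nv)"
  shows "(D * h\<^sup>2)\<^sup>2 + (D * h)\<^sup>2 / Le \<le> 6 * (Le * h\<^sup>2)\<^sup>2 * (nx\<^sup>2 + nv\<^sup>2 / Le + b\<^sup>2 / (3 * Le\<^sup>2))"
proof -
  define T where "T = h * Le * K + h * b"
  define w where "w = nv + T"
  have D2: "D = Le * h * w" unfolding D w_def T_def M by (simp add: power2_eq_square algebra_simps)
  have K1: "K * (1 - Le * h\<^sup>2) \<le> nx + h * nv + h\<^sup>2 * b" using KM M by (simp add: algebra_simps)
  have K2: "K \<le> 9/8 * (nx + h * nv + h\<^sup>2 * b)"
  proof -
    have "K * (8/9) \<le> K * (1 - Le * h\<^sup>2)" using step K by (intro mult_left_mono) auto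
    then show ?thesis using K1 by simp
  qed
  have hb: "h\<^sup>2 * Le \<le> 1/9" using step by (simp add: mult.commute)
  have T1: "T \<le> 9/8 * (h * Le * nx) + 1/8 * nv + 9/8 * (h * b)"
  proof -
    have "h * Le * K \<le> h * Le * (9/8 * (nx + h * nv + h\<^sup>2 * b))" using K2 h Le by (intro mult_left_mono) auto
    also have "\<dots> = 9/8 * (h * Le * nx) + 9/8 * ((h\<^sup>2 * Le) * nv) + 9/8 * ((h\<^sup>2 * Le) * (h * b))"
      by (simp add: power2_eq_square algebra_simps)
    also have "\<dots> \<le> 9/8 * (h * Le * nx) + 9/8 * (1/9 * nv) + 9/8 * (1/9 * (h * b))"
      using hb nv b h Le by (intro add_mono mult_left_mono mult_right_mono) auto
    finally show ?thesis unfolding T_def by (simp add: algebra_simps)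
  qed
  have T0: "T \<ge> 0" unfolding T_def using h Le K b by simp
  have sq1: "(h * Le * nx)\<^sup>2 \<le> Le * nx\<^sup>2 / 9"
  proof -
    have "(h * Le * nx)\<^sup>2 = (h\<^sup>2 * Le) * (Le * nx\<^sup>2)" by (simp add: power2_eq_square)
    also have "\<dots> \<le> 1/9 * (Le * nx\<^sup>2)" using hb Le by (intro mult_right_mono) auto
    finally show ?thesis by simp
  qed
  have sq2: "(h * b)\<^sup>2 \<le> b\<^sup>2 / (9 * Le)"
  proof -
    have "(h * b)\<^sup>2 * Le = (h\<^sup>2 * Le) * b\<^sup>2" by (simp add: power2_eq_square)
    also have "\<dots> \<le> 1/9 * b\<^sup>2" using hb by (intro mult_right_mono) auto
    finally show ?thesis using Le by (simp add: field_simps)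
  qed
  have T2: "T\<^sup>2 \<le> 3 * ((9/8 * (h * Le * nx))\<^sup>2 + (1/8 * nv)\<^sup>2 + (9/8 * (h * b))\<^sup>2)"
  proof -
    have "T\<^sup>2 \<le> (9/8 * (h * Le * nx) + 1/8 * nv + 9/8 * (h * b))\<^sup>2" using T1 T0 by (intro power_mono) auto
    also have "\<dots> \<le> 3 * ((9/8 * (h * Le * nx))\<^sup>2 + (1/8 * nv)\<^sup>2 + (9/8 * (h * b))\<^sup>2)"
      by (rule sqsum3)
    finally show ?thesis .
  qed
  have T3: "T\<^sup>2 \<le> 243/64 * (Le * nx\<^sup>2 / 9) + 3/64 * nv\<^sup>2 + 243/64 * (b\<^sup>2 / (9 * Le))"
  proof -
    have e1: "(9/8 * X)\<^sup>2 = 81/64 * X\<^sup>2" "(1/8 * X)\<^sup>2 = 1/64 * X\<^sup>2" for X :: real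
      by (simp_all add: power2_eq_square)
    have gen: "t \<le> 3*(81/64*A + 1/64*n + 81/64*B) \<Longrightarrow> A \<le> A' \<Longrightarrow> B \<le> B' \<Longrightarrow> t \<le> 243/64*A' + 3/64*n + 243/64*B'"
      for t A B A' B' n :: real by (simp add: ring_distribs)
    show ?thesis using gen[OF T2[unfolded e1] sq1 sq2] .
  qed
  have w2: "w\<^sup>2 \<le> 3/2 * nv\<^sup>2 + 3 * T\<^sup>2"
    unfolding w_def by (rule sqsum2)
  have W: "10/9 * w\<^sup>2 \<le> 6 * (Le * nx\<^sup>2 + nv\<^sup>2 + b\<^sup>2 / (3 * Le))"
  proof -
    have "b\<^sup>2 / (9 * Le) = 1/3 * (b\<^sup>2 / (3 * Le))" by simp
    moreover have gen: "w2 \<le> 3/2 * n + 3 * t \<Longrightarrow> t \<le> 243/64 * (X / 9) + 3/64 * n + 243/64 * (1/3 * Y)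
       \<Longrightarrow> 0 \<le> X \<Longrightarrow> 0 \<le> Y \<Longrightarrow> 0 \<le> n \<Longrightarrow> 10/9 * w2 \<le> 6 * (X + n + Y)" for w2 n t X Y :: real
      by (simp add: ring_distribs)
    moreover have "0 \<le> Le * nx\<^sup>2" "0 \<le> b\<^sup>2 / (3 * Le)" using Le by auto
    ultimately show ?thesis using w2 T3 by (metis zero_le_power2)
  qed
  have lhs: "(D * h\<^sup>2)\<^sup>2 + (D * h)\<^sup>2 / Le = Le * h^4 * (w\<^sup>2 * (Le * h\<^sup>2 + 1))"
    unfolding D2 using Le by (simp add: power2_eq_square power4_eq_xxxx field_simps)
  have "Le * h^4 * (w\<^sup>2 * (Le * h\<^sup>2 + 1)) \<le> Le * h^4 * (10/9 * w\<^sup>2)"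
  proof -
    have "w\<^sup>2 * (Le * h\<^sup>2 + 1) \<le> w\<^sup>2 * (10/9)" using step by (intro mult_left_mono) auto
    then show ?thesis using Le h by (intro mult_left_mono) (auto simp: mult.commute)
  qed
  also have "\<dots> \<le> Le * h^4 * (6 * (Le * nx\<^sup>2 + nv\<^sup>2 + b\<^sup>2 / (3 * Le)))"
    using W Le h by (intro mult_left_mono) auto
  also have "\<dots> = 6 * (Le * h\<^sup>2)\<^sup>2 * (nx\<^sup>2 + nv\<^sup>2 / Le + b\<^sup>2 / (3 * Le\<^sup>2))"
    using Le by (simp add: power2_eq_square power4_eq_xxxx field_simps)
  finally show ?thesis using lhs by simp
qed

theorem mainTheorem15:
  fixes eps L Lt h :: real
    and V :: "'a::euclidean_space \<Rightarrow> real" and gradV :: "'a \<Rightarrow> 'a"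
    and W :: "'a \<Rightarrow> 'a \<Rightarrow> real" and gradW1 :: "'a \<Rightarrow> 'a \<Rightarrow> 'a"
    and gradU :: "'a ^ 'n::finite \<Rightarrow> 'a ^ 'n"
    and x v :: "'a ^ 'n"
    and q p :: "real \<Rightarrow> 'a ^ 'n"
  assumes eps: "eps \<ge> 0" and L: "L > 0" and Lt: "Lt \<ge> 0"
    and V_deriv: "\<And>y. (V has_derivative (\<lambda>w. gradV y \<bullet> w)) (at y)"
    and V0: "V 0 = 0" and Vnonneg: "\<And>y. V y \<ge> 0"
    and V_lip: "\<And>y z. norm (gradV y - gradV z) \<le> L * norm (y - z)"
    and W_deriv: "\<And>y z. ((\<lambda>u. W u z) has_derivative (\<lambda>w. gradW1 y z \<bullet> w)) (at y)"
    and W_cont_diff: "continuous_on UNIV (\<lambda>(y, z). W y z)"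
    and W_sym: "\<And>y z. W y z = W z y"
    and W_lip: "\<And>y z y' z'. norm (gradW1 y z - gradW1 y' z') \<le> Lt * (norm (y - y') + norm (z - z'))"
    and U_grad: "\<And>X. (Upot eps V W has_derivative (\<lambda>Y. gradU X \<bullet> Y)) (at X)"
    and q_ode: "\<And>t. (q has_vector_derivative p t) (at t)"
    and p_ode: "\<And>t. (p has_vector_derivative (- gradU (q t))) (at t)"
    and q0: "q 0 = x" and p0: "p 0 = v"
    and h: "h > 0"
    and step: "(L + 2 * eps * Lt) * h\<^sup>2 \<le> 1 / 9"
  shows
    "(\<Sum>l\<in>UNIV. integral {0..1} (\<lambda>u.
        tnorm2 (L + 2 * eps * Lt)
          ((x + h *\<^sub>R v - (h\<^sup>2 / 2) *\<^sub>R gradU (x + (h * u) *\<^sub>R v)) $ l - q h $ l)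
          ((v - h *\<^sub>R gradU (x + (h * u) *\<^sub>R v)) $ l - p h $ l)))
     \<le> 6 * ((L + 2 * eps * Lt) * h\<^sup>2)\<^sup>2 *
        (\<Sum>l\<in>UNIV. tnorm2 (L + 2 * eps * Lt) (x $ l) (v $ l)
           + 1 / 3 * (L + 2 * eps * Lt) powi (-2) * eps\<^sup>2 * (norm (gradW1 0 0))\<^sup>2)"
proof -
  define Le where "Le = L + 2 * eps * Lt"
  define N where "N = real CARD('n)"
  define b where "b = sqrt N * eps * norm (gradW1 0 0)"
  have Le0: "Le > 0" using L eps Lt unfolding Le_def by (simp add: add_pos_nonneg)
  have N0: "N > 0" unfolding N_def by simp
  have b0: "b \<ge> 0" unfolding b_def using eps N0 by simp
  have GX: "\<And>X. gradU X = (\<chi> i. gradV (X$i) + (eps / real CARD('n)) *\<^sub>R (\<Sum>j\<in>UNIV. gradW1 (X$i) (X$j)))"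
    by (rule gradU_eq[OF Lt W_lip W_deriv W_sym V_deriv U_grad])
  have Glip: "norm (gradU X - gradU Y) \<le> Le * norm (X - Y)" for X Y
    unfolding Le_def by (rule G_lip[OF GX eps Lt _ V_lip W_lip]) (use L in simp)
  have gV0: "gradV 0 = 0" by (rule gradV0[OF V_deriv V0 Vnonneg])
  have G0eq: "gradU 0 = (\<chi> i. eps *\<^sub>R gradW1 0 0)"
    using N0 by (simp add: GX gV0 N_def vec_eq_iff sum_constant_scaleR)
  have G0: "norm (gradU 0) = b"
    unfolding G0eq b_def using eps by (simp add: norm_vec_def L2_set_constant N_def)
  have Gbd: "norm (gradU X) \<le> Le * norm X + b" for X
  proof -
    have "norm (gradU X) \<le> norm (gradU X - gradU 0) + norm (gradU 0)" using norm_triangle_ineq[of "gradU X - gradU 0" "gradU 0"] by simp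
    also have "\<dots> \<le> Le * norm X + b" using Glip[of X 0] G0 by simp
    finally show ?thesis .
  qed
  have Gcont: "continuous_on UNIV gradU"
    by (rule lipschitz_on_continuous_on[of Le]) (intro lipschitz_onI, use Glip Le0 in \<open>auto simp: dist_norm\<close>)
  have qc: "continuous_on UNIV q"
    using q_ode by (intro continuous_at_imp_continuous_on ballI has_vector_derivative_continuous) auto
  obtain r0 where r0: "r0 \<in> {0..h}" and r0max: "\<And>r. r \<in> {0..h} \<Longrightarrow> norm (q r) \<le> norm (q r0)"
  proof -
    have "continuous_on {0..h} (\<lambda>r. norm (q r))"
      by (intro continuous_on_norm continuous_on_subset[OF qc]) auto
    then have "\<exists>x\<in>{0..h}. \<forall>y\<in>{0..h}. norm (q y) \<le> norm (q x)"
      using h by (intro continuous_attains_sup) auto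
    then show ?thesis using that by blast
  qed
  define K where "K = norm (q r0)"
  define M where "M = Le * K + b"
  have K0: "K \<ge> 0" unfolding K_def by simp
  have M0: "M \<ge> 0" unfolding M_def using Le0 K0 b0 by simp
  have GqM: "norm (gradU (q r)) \<le> M" if "r \<in> {0..h}" for r
  proof -
    have "norm (gradU (q r)) \<le> Le * norm (q r) + b" by (rule Gbd)
    also have "\<dots> \<le> Le * K + b" using r0max[OF that] Le0 unfolding K_def by simp
    finally show ?thesis unfolding M_def .
  qed
  have pv: "norm (p s - v) \<le> M * s" if "s \<in> {0..h}" for s
  proof -
    have "norm (p s - p 0) \<le> M * s"
      by (rule vd_bound[of s p "\<lambda>t. - gradU (q t)" M]) (use that p_ode GqM in auto)
    then show ?thesis using p0 by simp
  qed
  have qb: "norm (q r - x - r *\<^sub>R v) \<le> (M * r) * r" if "r \<in> {0..h}" for r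
  proof -
    have "norm ((\<lambda>t. q t - t *\<^sub>R v) r - (\<lambda>t. q t - t *\<^sub>R v) 0) \<le> (M * r) * r"
    proof (rule vd_bound[of r _ "\<lambda>t. p t - v"])
      show "0 \<le> r" using that by simp
      show "((\<lambda>t. q t - t *\<^sub>R v) has_vector_derivative p t - v) (at t)" for t
      proof -
        have "((\<lambda>t. q t - t *\<^sub>R v) has_vector_derivative p t - (t *\<^sub>R 0 + 1 *\<^sub>R v)) (at t)"
          by (intro has_vector_derivative_diff q_ode has_vector_derivative_const
            has_vector_derivative_scaleR DERIV_ident)
        then show ?thesis by simp
      qed
      show "norm (p t - v) \<le> M * r" if "t \<in> {0..r}" for t
      proof -
        have "M * t \<le> M * r" using \<open>t \<in> {0..r}\<close> M0 by (intro mult_left_mono) auto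
        then show ?thesis using pv[of t] \<open>t \<in> {0..r}\<close> \<open>r \<in> {0..h}\<close> by simp
      qed
    qed
    then show ?thesis using q0 by (simp add: algebra_simps)
  qed
  have KM: "K \<le> norm x + h * norm v + h\<^sup>2 * M"
  proof -
    have "K \<le> norm (x + r0 *\<^sub>R v) + norm (q r0 - x - r0 *\<^sub>R v)" unfolding K_def
      using norm_triangle_ineq[of "x + r0 *\<^sub>R v" "q r0 - x - r0 *\<^sub>R v"] by simp
    also have "\<dots> \<le> norm x + norm (r0 *\<^sub>R v) + norm (q r0 - x - r0 *\<^sub>R v)"
      using norm_triangle_ineq[of x "r0 *\<^sub>R v"] by simp
    also have "\<dots> \<le> norm x + h * norm v + h\<^sup>2 * M"
    proof (intro add_mono order_refl)
      show "norm (r0 *\<^sub>R v) \<le> h * norm v" using r0 by (simp add: mult_right_mono)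
      have "norm (q r0 - x - r0 *\<^sub>R v) \<le> (M * r0) * r0" by (rule qb[OF r0])
      also have "\<dots> \<le> (M * h) * h" using r0 M0 by (intro mult_mono) (auto intro: mult_left_mono)
      finally show "norm (q r0 - x - r0 *\<^sub>R v) \<le> h\<^sup>2 * M" by (simp add: power2_eq_square algebra_simps)
    qed
    finally show ?thesis .
  qed
  define D where "D = Le * (h\<^sup>2 * M + h * norm v)"
  define R where "R = 6 * (Le * h\<^sup>2)\<^sup>2 * ((norm x)\<^sup>2 + (norm v)\<^sup>2 / Le + b\<^sup>2 / (3 * Le\<^sup>2))"
  have fin: "(D * h\<^sup>2)\<^sup>2 + (D * h)\<^sup>2 / Le \<le> R"
    unfolding R_def by (rule final_ineq[OF Le0 h _ _ _ b0 K0 M_def KM D_def]) (use step in \<open>auto simp: Le_def\<close>)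
  define F where "F l u = tnorm2 Le ((x + h *\<^sub>R v - (h\<^sup>2 / 2) *\<^sub>R gradU (x + (h * u) *\<^sub>R v)) $ l - q h $ l)
          ((v - h *\<^sub>R gradU (x + (h * u) *\<^sub>R v)) $ l - p h $ l)" for l u
  have pointwise: "(\<Sum>l\<in>UNIV. F l u) \<le> R" if u: "u \<in> {0..1}" for u
  proof -
    define y where "y = x + (h * u) *\<^sub>R v"
    have Gy: "norm (gradU (q s) - gradU y) \<le> D" if s: "s \<in> {0..h}" for s
    proof -
      have "norm (q s - y) = norm ((q s - x - s *\<^sub>R v) + (s - h * u) *\<^sub>R v)"
        unfolding y_def by (simp add: algebra_simps)
      also have "\<dots> \<le> norm (q s - x - s *\<^sub>R v) + \<bar>s - h * u\<bar> * norm v"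
        using norm_triangle_ineq[of "q s - x - s *\<^sub>R v" "(s - h * u) *\<^sub>R v"] by simp
      also have "\<dots> \<le> h\<^sup>2 * M + h * norm v"
      proof (intro add_mono mult_right_mono)
        have "norm (q s - x - s *\<^sub>R v) \<le> (M * s) * s" by (rule qb[OF s])
        also have "\<dots> \<le> (M * h) * h" using s M0 by (intro mult_mono) (auto intro: mult_left_mono)
        finally show "norm (q s - x - s *\<^sub>R v) \<le> h\<^sup>2 * M" by (simp add: power2_eq_square algebra_simps)
        have "h * u \<le> h" using u h by (simp add: mult_left_le)
        moreover have "0 \<le> h * u" using u h by simp
        ultimately show "\<bar>s - h * u\<bar> \<le> h" using s by auto
      qed simp
      finally have "norm (q s - y) \<le> h\<^sup>2 * M + h * norm v" .
      then have "Le * norm (q s - y) \<le> D" unfolding D_def using Le0 by (intro mult_left_mono) auto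
      then show ?thesis using Glip[of "q s" y] by simp
    qed
    define \<phi> where "\<phi> s = p s - v + s *\<^sub>R gradU y" for s
    have phi_d: "(\<phi> has_vector_derivative (- gradU (q t) + gradU y)) (at t)" for t
    proof -
      have "(\<phi> has_vector_derivative (- gradU (q t) - 0 + (t *\<^sub>R 0 + 1 *\<^sub>R gradU y))) (at t)"
        unfolding \<phi>_def[abs_def]
        by (intro has_vector_derivative_add has_vector_derivative_diff p_ode has_vector_derivative_const
            has_vector_derivative_scaleR DERIV_ident)
      then show ?thesis by simp
    qed
    have phi: "norm (\<phi> s) \<le> D * s" if s: "s \<in> {0..h}" for s
    proof -
      have "norm (\<phi> s - \<phi> 0) \<le> D * s"
        by (rule vd_bound[of s \<phi> "\<lambda>t. - gradU (q t) + gradU y" D])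
           (use s phi_d Gy in \<open>auto simp: norm_minus_commute\<close>)
      then show ?thesis using p0 by (simp add: \<phi>_def)
    qed
    define \<psi> where "\<psi> s = q s - x - s *\<^sub>R v + (s\<^sup>2 / 2) *\<^sub>R gradU y" for s
    have psi_d: "(\<psi> has_vector_derivative \<phi> t) (at t)" for t
    proof -
      have sq: "((\<lambda>s. s\<^sup>2 / 2) has_field_derivative t) (at t)"
        by (auto intro!: derivative_eq_intros)
      have "(\<psi> has_vector_derivative (p t - 0 - (t *\<^sub>R 0 + 1 *\<^sub>R v) + ((t\<^sup>2 / 2) *\<^sub>R 0 + t *\<^sub>R gradU y))) (at t)"
        unfolding \<psi>_def[abs_def]
        by (intro has_vector_derivative_add has_vector_derivative_diff q_ode has_vector_derivative_const
            has_vector_derivative_scaleR DERIV_ident sq)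
      then show ?thesis by (simp add: \<phi>_def)
    qed
    have psi: "norm (\<psi> h) \<le> (D * h) * h"
    proof -
      have "norm (\<psi> h - \<psi> 0) \<le> (D * h) * h"
      proof (rule vd_bound[of h \<psi> \<phi>])
        show "0 \<le> h" using h by simp
        show "(\<psi> has_vector_derivative \<phi> t) (at t)" for t by (rule psi_d)
        show "norm (\<phi> t) \<le> D * h" if "t \<in> {0..h}" for t
        proof -
          have "D \<ge> 0" unfolding D_def using Le0 M0 h by simp
          then have "D * t \<le> D * h" using that by (intro mult_left_mono) auto
          then show ?thesis using phi[OF that] by simp
        qed
      qed
      then show ?thesis using q0 by (simp add: \<psi>_def)
    qed
    have eA: "x + h *\<^sub>R v - (h\<^sup>2 / 2) *\<^sub>R gradU y - q h = - \<psi> h" by (simp add: \<psi>_def algebra_simps)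
    have eB: "v - h *\<^sub>R gradU y - p h = - \<phi> h" by (simp add: \<phi>_def algebra_simps)
    have "(\<Sum>l\<in>UNIV. F l u) = (norm (\<psi> h))\<^sup>2 + (norm (\<phi> h))\<^sup>2 / Le"
      unfolding F_def y_def[symmetric] vector_minus_component[symmetric] sum_tnorm2 eA eB by simp
    also have "\<dots> \<le> (D * h\<^sup>2)\<^sup>2 + (D * h)\<^sup>2 / Le"
    proof (intro add_mono divide_right_mono power_mono)
      show "norm (\<psi> h) \<le> D * h\<^sup>2" using psi by (simp add: power2_eq_square algebra_simps)
      show "norm (\<phi> h) \<le> D * h" using phi[of h] h by simp
    qed (use Le0 in auto)
    also have "\<dots> \<le> R" by (rule fin)
    finally show ?thesis .
  qed
  have Gc': "continuous_on S (\<lambda>u. gradU (x + (h * u) *\<^sub>R v))" for S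
    by (rule continuous_on_compose2[OF Gcont]) (auto intro!: continuous_intros)
  have Fint: "F l integrable_on {0..1}" for l
    unfolding F_def[abs_def] tnorm2_def
    using Le0 by (intro integrable_continuous_real continuous_intros Gc') auto
  have "(\<Sum>l\<in>UNIV. integral {0..1} (F l)) = integral {0..1} (\<lambda>u. \<Sum>l\<in>UNIV. F l u)"
    by (rule integral_sum[symmetric]) (auto intro: Fint)
  also have "\<dots> \<le> integral {0..1} (\<lambda>u::real. R)"
  proof (rule Henstock_Kurzweil_Integration.integral_le)
    show "(\<lambda>u. \<Sum>l\<in>UNIV. F l u) integrable_on {0..1}" by (intro integrable_sum Fint) simp
    show "(\<lambda>u::real. R) integrable_on {0..1}" by (rule integrable_const_ivl)
    show "(\<Sum>l\<in>UNIV. F l u) \<le> R" if "u \<in> {0..1}" for u using pointwise[OF that] .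
  qed
  also have "\<dots> = R" by simp
  also have "R = 6 * ((L + 2 * eps * Lt) * h\<^sup>2)\<^sup>2 *
        (\<Sum>l\<in>UNIV. tnorm2 (L + 2 * eps * Lt) (x $ l) (v $ l)
           + 1 / 3 * (L + 2 * eps * Lt) powi (-2) * eps\<^sup>2 * (norm (gradW1 0 0))\<^sup>2)"
  proof -
    have "b\<^sup>2 = N * (eps\<^sup>2 * (norm (gradW1 0 0))\<^sup>2)" unfolding b_def using N0 by (simp add: power_mult_distrib)
    then have "(\<Sum>l\<in>UNIV. tnorm2 Le (x $ l) (v $ l) + 1 / 3 * Le powi (-2) * eps\<^sup>2 * (norm (gradW1 0 0))\<^sup>2)
       = (norm x)\<^sup>2 + (norm v)\<^sup>2 / Le + b\<^sup>2 / (3 * Le\<^sup>2)"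
      by (simp add: sum.distrib sum_tnorm2 N_def power_int_minus field_simps)
    then show ?thesis unfolding R_def Le_def by simp
  qed
  finally show ?thesis unfolding F_def Le_def .
qed

end
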